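(* Let $\mathfrak{q}_1,\dots,\mathfrak{q}_n$ be finite-dimensional complex simply-complete Lie algebras, each equipped with a CPA-product. Then the direct Lie algebra sum $\mathfrak{q}_1\oplus\cdots\oplus\mathfrak{q}_n$ admits the CPA-product given componentwise by $(x_1,\dots,x_n)\cdot(y_1,\dots,y_n)=(x_1\cdot y_1,\dots,x_n\cdot y_n)$. Conversely, if $\mathfrak{q}=\mathfrak{q}_1\oplus\cdots\oplus\mathfrak{q}_n$ is a complete Lie algebra which is a direct sum of simply-complete ideals $\mathfrak{q}_i$, then every CPA-product on $\mathfrak{q}$ is of this componentwise form (for CPA-products on the $\mathfrak{q}_i$).
   Context: A Lie algebra $\mathfrak{g}$ is complete if $Z(\mathfrak{g})=0$ and every derivation is inner ($\mathrm{Der}(\mathfrak{g})=\mathrm{ad}(\mathfrak{g})$); it is simply-complete if it is complete and no non-trivial ideal of it is complete. A CPA-product on a Lie algebra is a bilinear product $x\cdot y$ satisfying, for all $x,y,z$: $x\cdot y=y\cdot x$; $[x,y]\cdot z=x\cdot(y\cdot z)-y\cdot(x\cdot z)$; $x\cdot[y,z]=[x\cdot y,z]+[y,x\cdot z]$. *)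

theory Defs
  imports Complex_Main "HOL-Library.Function_Algebras"
begin

text \<open>Complex Lie algebras are modelled concretely: an ambient abelian group 'a with a
complex scalar multiplication s (assumed to form a vector space), a carrier subspace L
and a bracket b; all axioms are imposed on the carrier only.\<close>

definition bilinear_on :: "(complex \<Rightarrow> 'a \<Rightarrow> 'a) \<Rightarrow> 'a::ab_group_add set \<Rightarrow> ('a \<Rightarrow> 'a \<Rightarrow> 'a) \<Rightarrow> bool" where
  "bilinear_on s L p \<longleftrightarrow> (\<forall>x\<in>L. \<forall>y\<in>L. \<forall>z\<in>L. \<forall>c.
      p (x + y) z = p x z + p y z \<and> p x (y + z) = p x y + p x z \<and>
      p (s c x) y = s c (p x y) \<and> p x (s c y) = s c (p x y))"

definition fin_dim :: "(complex \<Rightarrow> 'a \<Rightarrow> 'a) \<Rightarrow> 'a::ab_group_add set \<Rightarrow> bool" where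
  "fin_dim s L \<longleftrightarrow> (\<exists>B. finite B \<and> module.span s B = L)"

definition lie_algebra :: "(complex \<Rightarrow> 'a \<Rightarrow> 'a) \<Rightarrow> 'a::ab_group_add set \<Rightarrow> ('a \<Rightarrow> 'a \<Rightarrow> 'a) \<Rightarrow> bool" where
  "lie_algebra s L b \<longleftrightarrow> module.subspace s L \<and> (\<forall>x\<in>L. \<forall>y\<in>L. b x y \<in> L) \<and>
     bilinear_on s L b \<and> (\<forall>x\<in>L. b x x = 0) \<and>
     (\<forall>x\<in>L. \<forall>y\<in>L. \<forall>z\<in>L. b x (b y z) + b y (b z x) + b z (b x y) = 0)"

definition lie_derivation :: "(complex \<Rightarrow> 'a \<Rightarrow> 'a) \<Rightarrow> 'a::ab_group_add set \<Rightarrow> ('a \<Rightarrow> 'a \<Rightarrow> 'a) \<Rightarrow> ('a \<Rightarrow> 'a) \<Rightarrow> bool" where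
  "lie_derivation s L b D \<longleftrightarrow> (\<forall>x\<in>L. D x \<in> L) \<and>
     (\<forall>x\<in>L. \<forall>y\<in>L. \<forall>c. D (x + y) = D x + D y \<and> D (s c x) = s c (D x)) \<and>
     (\<forall>x\<in>L. \<forall>y\<in>L. D (b x y) = b (D x) y + b x (D y))"

definition lie_center :: "'a::ab_group_add set \<Rightarrow> ('a \<Rightarrow> 'a \<Rightarrow> 'a) \<Rightarrow> 'a set" where
  "lie_center L b = {z\<in>L. \<forall>x\<in>L. b z x = 0}"

definition complete_lie :: "(complex \<Rightarrow> 'a \<Rightarrow> 'a) \<Rightarrow> 'a::ab_group_add set \<Rightarrow> ('a \<Rightarrow> 'a \<Rightarrow> 'a) \<Rightarrow> bool" where
  "complete_lie s L b \<longleftrightarrow> lie_algebra s L b \<and> lie_center L b = {0} \<and>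
     (\<forall>D. lie_derivation s L b D \<longrightarrow> (\<exists>x\<in>L. \<forall>y\<in>L. D y = b x y))"

definition lie_ideal :: "(complex \<Rightarrow> 'a \<Rightarrow> 'a) \<Rightarrow> 'a::ab_group_add set \<Rightarrow> ('a \<Rightarrow> 'a \<Rightarrow> 'a) \<Rightarrow> 'a set \<Rightarrow> bool" where
  "lie_ideal s L b I \<longleftrightarrow> module.subspace s I \<and> I \<subseteq> L \<and> (\<forall>x\<in>L. \<forall>y\<in>I. b x y \<in> I)"

definition simply_complete :: "(complex \<Rightarrow> 'a \<Rightarrow> 'a) \<Rightarrow> 'a::ab_group_add set \<Rightarrow> ('a \<Rightarrow> 'a \<Rightarrow> 'a) \<Rightarrow> bool" where
  "simply_complete s L b \<longleftrightarrow> complete_lie s L b \<and>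
     (\<forall>I. lie_ideal s L b I \<and> I \<noteq> {0} \<and> I \<noteq> L \<longrightarrow> \<not> complete_lie s I b)"

definition cpa_product :: "(complex \<Rightarrow> 'a \<Rightarrow> 'a) \<Rightarrow> 'a::ab_group_add set \<Rightarrow> ('a \<Rightarrow> 'a \<Rightarrow> 'a) \<Rightarrow> ('a \<Rightarrow> 'a \<Rightarrow> 'a) \<Rightarrow> bool" where
  "cpa_product s L b p \<longleftrightarrow> (\<forall>x\<in>L. \<forall>y\<in>L. p x y \<in> L) \<and> bilinear_on s L p \<and>
     (\<forall>x\<in>L. \<forall>y\<in>L. \<forall>z\<in>L.
        p x y = p y x \<and>
        p (b x y) z = p x (p y z) - p y (p x z) \<and>
        p x (b y z) = b (p x y) z + b y (p x z))"

text \<open>External direct sum of Q 0, ..., Q (n-1): tuples encoded as functions nat => 'a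
vanishing from n on; operations componentwise.\<close>
definition dsum_carrier :: "nat \<Rightarrow> (nat \<Rightarrow> 'a::ab_group_add set) \<Rightarrow> (nat \<Rightarrow> 'a) set" where
  "dsum_carrier n Q = {f. (\<forall>i<n. f i \<in> Q i) \<and> (\<forall>i\<ge>n. f i = 0)}"

definition dsum_op :: "nat \<Rightarrow> (nat \<Rightarrow> 'a \<Rightarrow> 'a \<Rightarrow> 'a::ab_group_add) \<Rightarrow> (nat \<Rightarrow> 'a) \<Rightarrow> (nat \<Rightarrow> 'a) \<Rightarrow> (nat \<Rightarrow> 'a)" where
  "dsum_op n B f g = (\<lambda>i. if i < n then B i (f i) (g i) else 0)"

definition dsum_scale :: "(complex \<Rightarrow> 'a \<Rightarrow> 'a) \<Rightarrow> complex \<Rightarrow> (nat \<Rightarrow> 'a) \<Rightarrow> (nat \<Rightarrow> 'a)" where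
  "dsum_scale s c f = (\<lambda>i. s c (f i))"

definition internal_dsum :: "nat \<Rightarrow> (nat \<Rightarrow> 'a::ab_group_add set) \<Rightarrow> 'a set \<Rightarrow> bool" where
  "internal_dsum n Qi Q \<longleftrightarrow>
     Q = {(\<Sum>i<n. xs i) | xs. \<forall>i<n. xs i \<in> Qi i} \<and>
     (\<forall>xs. (\<forall>i<n. xs i \<in> Qi i) \<and> (\<Sum>i<n. xs i) = 0 \<longrightarrow> (\<forall>i<n. xs i = 0))"

end

theory Submission
  imports Defs
begin

lemma vs_module: "vector_space s \<Longrightarrow> module s"
  by (simp add: vector_space_def module_def)

lemma bilD:
  assumes "bilinear_on s L p" "x \<in> L" "y \<in> L" "z \<in> L"
  shows "p (x + y) z = p x z + p y z" "p x (y + z) = p x y + p x z"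
    "p (s c x) y = s c (p x y)" "p x (s c y) = s c (p x y)"
  using assms unfolding bilinear_on_def by blast+

lemma bilS:
  assumes "bilinear_on s L p" "x \<in> L" "y \<in> L"
  shows "p (s c x) y = s c (p x y)" "p x (s c y) = s c (p x y)"
  using bilD(3,4)[OF assms(1,2,3,3)] by blast+

lemma bil_zero_left:
  assumes "bilinear_on s L p" "0 \<in> L" "z \<in> L"
  shows "p 0 z = 0"
proof -
  have "p (0 + 0) z = p 0 z + p 0 z" using assms unfolding bilinear_on_def by blast
  thus ?thesis by simp
qed

lemma bil_zero_right:
  assumes "bilinear_on s L p" "0 \<in> L" "z \<in> L"
  shows "p z 0 = 0"
proof -
  have "p z (0 + 0) = p z 0 + p z 0" using assms unfolding bilinear_on_def by blast
  thus ?thesis by simp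
qed

lemma bil_sum_left:
  assumes m: "module s" and sub: "module.subspace s L" and bl: "bilinear_on s L p"
    and fin: "finite A" and f: "\<forall>i\<in>A. f i \<in> L" and z: "z \<in> L"
  shows "p (sum f A) z = (\<Sum>i\<in>A. p (f i) z)"
  using fin f
proof (induction A rule: finite_induct)
  case empty
  then show ?case using bil_zero_left[OF bl module.subspace_0[OF m sub] z] by simp
next
  case (insert x F)
  have sF: "sum f F \<in> L" by (rule module.subspace_sum[OF m sub]) (use insert in auto)
  have "p (sum f (insert x F)) z = p (f x + sum f F) z" using insert by simp
  also have "\<dots> = p (f x) z + p (sum f F) z" using bilD(1)[OF bl _ sF z] insert by simp
  finally show ?case using insert by simp
qed

lemma bil_sum_right:
  assumes m: "module s" and sub: "module.subspace s L" and bl: "bilinear_on s L p"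
    and fin: "finite A" and f: "\<forall>i\<in>A. f i \<in> L" and z: "z \<in> L"
  shows "p z (sum f A) = (\<Sum>i\<in>A. p z (f i))"
  using fin f
proof (induction A rule: finite_induct)
  case empty
  then show ?case using bil_zero_right[OF bl module.subspace_0[OF m sub] z] by simp
next
  case (insert x F)
  have sF: "sum f F \<in> L" by (rule module.subspace_sum[OF m sub]) (use insert in auto)
  have "p z (sum f (insert x F)) = p z (f x + sum f F)" using insert by simp
  also have "\<dots> = p z (f x) + p z (sum f F)" using bilD(2)[OF bl z _ sF] insert by simp
  finally show ?case using insert by simp
qed

lemma part1:
  assumes vs: "vector_space s"
    and h: "\<forall>i<n. cpa_product s (Q i) (B i) (P i)"
  shows "cpa_product (dsum_scale s) (dsum_carrier n Q) (dsum_op n B) (dsum_op n P)"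
proof -
  have m: "module s" using vs by (rule vs_module)
  have z: "\<And>c. s c 0 = 0" using module.scale_zero_right[OF m] by blast
  have cl: "\<And>i x y. i < n \<Longrightarrow> x \<in> Q i \<Longrightarrow> y \<in> Q i \<Longrightarrow> P i x y \<in> Q i"
    using h unfolding cpa_product_def by blast
  have bl: "\<And>i. i < n \<Longrightarrow> bilinear_on s (Q i) (P i)"
    using h unfolding cpa_product_def by blast
  have ax: "\<And>i x y z. i < n \<Longrightarrow> x \<in> Q i \<Longrightarrow> y \<in> Q i \<Longrightarrow> z \<in> Q i \<Longrightarrow>
        P i x y = P i y x \<and>
        P i (B i x y) z = P i x (P i y z) - P i y (P i x z) \<and>
        P i x (B i y z) = B i (P i x y) z + B i y (P i x z)"
    using h unfolding cpa_product_def by blast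
  show ?thesis
    unfolding cpa_product_def
  proof (intro conjI ballI)
    fix x y assume "x \<in> dsum_carrier n Q" "y \<in> dsum_carrier n Q"
    then show "dsum_op n P x y \<in> dsum_carrier n Q"
      using cl unfolding dsum_carrier_def dsum_op_def by auto
  next
    show "bilinear_on (dsum_scale s) (dsum_carrier n Q) (dsum_op n P)"
      unfolding bilinear_on_def
    proof (intro ballI allI conjI)
      fix x y w c assume xyw: "x \<in> dsum_carrier n Q" "y \<in> dsum_carrier n Q" "w \<in> dsum_carrier n Q"
      have q1: "\<And>i. i < n \<Longrightarrow> x i \<in> Q i" and q2: "\<And>i. i < n \<Longrightarrow> y i \<in> Q i"
        and q3: "\<And>i. i < n \<Longrightarrow> w i \<in> Q i"
        using xyw unfolding dsum_carrier_def by auto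
      note r = bilD[OF bl] bilS[OF bl]
      show "dsum_op n P (x + y) w = dsum_op n P x w + dsum_op n P y w"
        unfolding dsum_op_def by (rule ext) (simp add: r q1 q2 q3)
      show "dsum_op n P x (y + w) = dsum_op n P x y + dsum_op n P x w"
        unfolding dsum_op_def by (rule ext) (simp add: r q1 q2 q3)
      show "dsum_op n P (dsum_scale s c x) y = dsum_scale s c (dsum_op n P x y)"
        unfolding dsum_op_def dsum_scale_def by (rule ext) (simp add: r q1 q2 q3 z)
      show "dsum_op n P x (dsum_scale s c y) = dsum_scale s c (dsum_op n P x y)"
        unfolding dsum_op_def dsum_scale_def by (rule ext) (simp add: r q1 q2 q3 z)
    qed
  next
    fix x y w assume xyw: "x \<in> dsum_carrier n Q" "y \<in> dsum_carrier n Q" "w \<in> dsum_carrier n Q"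
    have q: "\<And>i. i < n \<Longrightarrow> x i \<in> Q i \<and> y i \<in> Q i \<and> w i \<in> Q i"
      using xyw unfolding dsum_carrier_def by auto
    show "dsum_op n P x y = dsum_op n P y x"
      unfolding dsum_op_def
    proof (rule ext)
      fix i show "(if i < n then P i (x i) (y i) else 0) = (if i < n then P i (y i) (x i) else 0)"
        using q[of i] ax[of i "x i" "y i" "y i"] by auto
    qed
    show "dsum_op n P (dsum_op n B x y) w =
          dsum_op n P x (dsum_op n P y w) - dsum_op n P y (dsum_op n P x w)"
      unfolding dsum_op_def using q ax by (auto simp: fun_eq_iff)
    show "dsum_op n P x (dsum_op n B y w) =
          dsum_op n B (dsum_op n P x y) w + dsum_op n B y (dsum_op n P x w)"
      unfolding dsum_op_def using q ax by (auto simp: fun_eq_iff)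
  qed
qed

lemma part2:
  assumes vs: "vector_space s" and cq: "complete_lie s Q b"
    and ids: "internal_dsum n Qi Q"
    and idl: "\<forall>i<n. lie_ideal s Q b (Qi i)"
    and cp: "cpa_product s Q b p"
  shows "\<exists>P. (\<forall>i<n. cpa_product s (Qi i) b (P i)) \<and>
           (\<forall>xs ys. (\<forall>i<n. xs i \<in> Qi i \<and> ys i \<in> Qi i) \<longrightarrow>
              p (\<Sum>i<n. xs i) (\<Sum>i<n. ys i) = (\<Sum>i<n. P i (xs i) (ys i)))"
proof -
  have m: "module s" using vs by (rule vs_module)
  have la: "lie_algebra s Q b" using cq unfolding complete_lie_def by blast
  have subQ: "module.subspace s Q" using la unfolding lie_algebra_def by blast
  have subI: "\<And>i. i < n \<Longrightarrow> module.subspace s (Qi i)" using idl unfolding lie_ideal_def by blast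
  have IQ: "\<And>i. i < n \<Longrightarrow> Qi i \<subseteq> Q" using idl unfolding lie_ideal_def by blast
  have ideal: "\<And>i x y. i < n \<Longrightarrow> x \<in> Q \<Longrightarrow> y \<in> Qi i \<Longrightarrow> b x y \<in> Qi i"
    using idl unfolding lie_ideal_def by blast
  have bl: "bilinear_on s Q p" using cp unfolding cpa_product_def by blast
  have pcl: "\<And>x y. x \<in> Q \<Longrightarrow> y \<in> Q \<Longrightarrow> p x y \<in> Q" using cp unfolding cpa_product_def by blast
  have ax: "\<And>x y z. x \<in> Q \<Longrightarrow> y \<in> Q \<Longrightarrow> z \<in> Q \<Longrightarrow>
        p x y = p y x \<and> p (b x y) z = p x (p y z) - p y (p x z) \<and>
        p x (b y z) = b (p x y) z + b y (p x z)"
    using cp unfolding cpa_product_def by blast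
  \<comment> \<open>left multiplications are derivations, hence inner, hence preserve ideals\<close>
  have pres: "\<And>i x y. i < n \<Longrightarrow> x \<in> Q \<Longrightarrow> y \<in> Qi i \<Longrightarrow> p x y \<in> Qi i"
  proof -
    fix i x y assume i: "i < n" and x: "x \<in> Q" and y: "y \<in> Qi i"
    have "lie_derivation s Q b (p x)"
      unfolding lie_derivation_def
    proof (intro conjI ballI allI)
      fix u assume "u \<in> Q" then show "p x u \<in> Q" using pcl x by blast
    next
      fix u v c assume "u \<in> Q" "v \<in> Q"
      then show "p x (u + v) = p x u + p x v" "p x (s c u) = s c (p x u)"
        using bilD(2,4)[OF bl x] by blast+
    next
      fix u v assume "u \<in> Q" "v \<in> Q"
      then show "p x (b u v) = b (p x u) v + b u (p x v)" using ax x by blast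
    qed
    then obtain a where a: "a \<in> Q" "\<forall>w\<in>Q. p x w = b a w"
      using cq unfolding complete_lie_def by blast
    have "y \<in> Q" using IQ i y by blast
    then have "p x y = b a y" using a by blast
    then show "p x y \<in> Qi i" using ideal[OF i a(1) y] by simp
  qed
  have disj: "\<And>i j z. i < n \<Longrightarrow> j < n \<Longrightarrow> i \<noteq> j \<Longrightarrow> z \<in> Qi i \<Longrightarrow> z \<in> Qi j \<Longrightarrow> z = 0"
  proof -
    fix i j z assume i: "i < n" and j: "j < n" and ij: "i \<noteq> j" and zi: "z \<in> Qi i" and zj: "z \<in> Qi j"
    define xs where "xs = (\<lambda>k. if k = i then z else if k = j then - z else 0)"
    have mem: "\<forall>k<n. xs k \<in> Qi k"
      using zi zj module.subspace_0[OF m subI] module.subspace_neg[OF m subI[OF j] zj]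
      unfolding xs_def by auto
    have "(\<Sum>k<n. xs k) = (\<Sum>k\<in>{i,j}. xs k)"
      by (rule sum.mono_neutral_right) (use i j in \<open>auto simp: xs_def\<close>)
    also have "\<dots> = 0" using ij by (simp add: xs_def)
    finally have "\<forall>k<n. xs k = 0" using ids mem unfolding internal_dsum_def by blast
    then show "z = 0" using i unfolding xs_def by auto
  qed
  have cross: "\<And>i j x y. i < n \<Longrightarrow> j < n \<Longrightarrow> i \<noteq> j \<Longrightarrow> x \<in> Qi i \<Longrightarrow> y \<in> Qi j \<Longrightarrow> p x y = 0"
  proof -
    fix i j x y assume i: "i < n" and j: "j < n" and ij: "i \<noteq> j" and x: "x \<in> Qi i" and y: "y \<in> Qi j"
    have xQ: "x \<in> Q" and yQ: "y \<in> Q" using IQ i j x y by blast+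
    have "p x y \<in> Qi j" using pres[OF j xQ y] .
    moreover have "p x y = p y x" using ax xQ yQ by blast
    moreover have "p y x \<in> Qi i" using pres[OF i yQ x] .
    ultimately show "p x y = 0" using disj[OF i j ij] by simp
  qed
  show ?thesis
  proof (intro exI[of _ "\<lambda>i. p"] conjI allI impI)
    fix i assume i: "i < n"
    show "cpa_product s (Qi i) b p"
      unfolding cpa_product_def
    proof (intro conjI ballI)
      fix x y assume "x \<in> Qi i" "y \<in> Qi i"
      then show "p x y \<in> Qi i" using pres[OF i] IQ[OF i] by blast
    next
      show "bilinear_on s (Qi i) p" using bl IQ[OF i] unfolding bilinear_on_def by blast
    next
      fix x y z assume "x \<in> Qi i" "y \<in> Qi i" "z \<in> Qi i"
      then have "x \<in> Q" "y \<in> Q" "z \<in> Q" using IQ[OF i] by blast+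
      then show "p x y = p y x" "p (b x y) z = p x (p y z) - p y (p x z)"
        "p x (b y z) = b (p x y) z + b y (p x z)" using ax by blast+
    qed
  next
    fix xs ys assume h: "\<forall>i<n. xs i \<in> Qi i \<and> ys i \<in> Qi i"
    have xQ: "\<forall>i\<in>{..<n}. xs i \<in> Q" using h IQ by (meson lessThan_iff subsetD)
    have yQ: "\<forall>i\<in>{..<n}. ys i \<in> Q" using h IQ by (meson lessThan_iff subsetD)
    have sy: "(\<Sum>i<n. ys i) \<in> Q" by (rule module.subspace_sum[OF m subQ]) (use yQ in auto)
    have "p (\<Sum>i<n. xs i) (\<Sum>i<n. ys i) = (\<Sum>i<n. p (xs i) (\<Sum>j<n. ys j))"
      using bil_sum_left[OF m subQ bl _ xQ sy] by simp
    also have "\<dots> = (\<Sum>i<n. \<Sum>j<n. p (xs i) (ys j))"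
      using bil_sum_right[OF m subQ bl _ yQ] xQ by simp
    also have "\<dots> = (\<Sum>i<n. p (xs i) (ys i))"
    proof (rule sum.cong[OF refl])
      fix i assume i: "i \<in> {..<n}"
      have z0: "\<forall>j\<in>{..<n} - {i}. p (xs i) (ys j) = 0"
      proof
        fix j assume j: "j \<in> {..<n} - {i}"
        show "p (xs i) (ys j) = 0" using cross[of i j "xs i" "ys j"] h i j by auto
      qed
      have "(\<Sum>j<n. p (xs i) (ys j)) = (\<Sum>j\<in>{i}. p (xs i) (ys j))"
        by (rule sum.mono_neutral_right) (use i z0 in auto)
      then show "(\<Sum>j<n. p (xs i) (ys j)) = p (xs i) (ys i)" by simp
    qed
    finally show "p (\<Sum>i<n. xs i) (\<Sum>i<n. ys i) = (\<Sum>i<n. p (xs i) (ys i))" .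
  qed
qed

theorem mainTheorem11:
  shows
  "(\<forall>(s :: complex \<Rightarrow> 'a::ab_group_add \<Rightarrow> 'a) (n::nat) Q B P.
      vector_space s \<and>
      (\<forall>i<n. fin_dim s (Q i) \<and> simply_complete s (Q i) (B i) \<and> cpa_product s (Q i) (B i) (P i))
      \<longrightarrow> cpa_product (dsum_scale s) (dsum_carrier n Q) (dsum_op n B) (dsum_op n P))
   \<and>
   (\<forall>(s :: complex \<Rightarrow> 'a \<Rightarrow> 'a) (n::nat) (Q :: 'a set) b Qi.
      vector_space s \<and> fin_dim s Q \<and> complete_lie s Q b \<and>
      internal_dsum n Qi Q \<and>
      (\<forall>i<n. lie_ideal s Q b (Qi i) \<and> simply_complete s (Qi i) b)
      \<longrightarrow> (\<forall>p. cpa_product s Q b p \<longrightarrow>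
            (\<exists>P. (\<forall>i<n. cpa_product s (Qi i) b (P i)) \<and>
                 (\<forall>xs ys. (\<forall>i<n. xs i \<in> Qi i \<and> ys i \<in> Qi i) \<longrightarrow>
                    p (\<Sum>i<n. xs i) (\<Sum>i<n. ys i) = (\<Sum>i<n. P i (xs i) (ys i))))))"
proof (intro conjI allI impI)
  fix s :: "complex \<Rightarrow> 'a \<Rightarrow> 'a" and n :: nat and Q B P
  assume "vector_space s \<and>
      (\<forall>i<n. fin_dim s (Q i) \<and> simply_complete s (Q i) (B i) \<and> cpa_product s (Q i) (B i) (P i))"
  then show "cpa_product (dsum_scale s) (dsum_carrier n Q) (dsum_op n B) (dsum_op n P)"
    using part1 by blast
next
  fix s :: "complex \<Rightarrow> 'a \<Rightarrow> 'a" and n :: nat and Q b Qi p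
  assume "vector_space s \<and> fin_dim s Q \<and> complete_lie s Q b \<and>
      internal_dsum n Qi Q \<and>
      (\<forall>i<n. lie_ideal s Q b (Qi i) \<and> simply_complete s (Qi i) b)"
    and "cpa_product s Q b p"
  then show "\<exists>P. (\<forall>i<n. cpa_product s (Qi i) b (P i)) \<and>
                 (\<forall>xs ys. (\<forall>i<n. xs i \<in> Qi i \<and> ys i \<in> Qi i) \<longrightarrow>
                    p (\<Sum>i<n. xs i) (\<Sum>i<n. ys i) = (\<Sum>i<n. P i (xs i) (ys i)))"
    using part2[of s Q b n Qi p] by blast
qed

end
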